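(* Let $f\in\mathbb{Q}[[y,z]]$ be the formal power series $$f=\frac{(1-y-z)-\sqrt{(1-y-z)^2-4yz}}{2},$$ which is the unique formal power series with zero constant term satisfying $f=(y+f)(z+f)$. Then for all integers $n\ge 1$, $0\le r\le n$ and $k\ge 0$, the number $N_k^{n,r}$ equals the coefficient of $y^r z^{n-r}$ in $(y+z+2f)^{k+1}$.
   Context: A lattice path from $(0,0)$ to $(r,n-r)$ (with integers $n\ge 1$, $0\le r\le n$) is a sequence of lattice points $v_0=(0,0),v_1,\dots,v_n=(r,n-r)$ with each step $v_i-v_{i-1}\in\{(1,0),(0,1)\}$ (an E step or an N step); its vertex set is $\{v_0,\dots,v_n\}$. For $k\ge 0$, $N_k^{n,r}$ denotes the number of ordered pairs $(P,Q)$ of lattice paths from $(0,0)$ to $(r,n-r)$ such that the intersection of their vertex sets, with the two points $(0,0)$ and $(r,n-r)$ removed, has exactly $k$ elements. The square root is the formal power series square root with constant term $1$. *)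

theory Defs
  imports "HOL-Computational_Algebra.Formal_Power_Series"
begin

definition lattice_path :: "nat \<Rightarrow> nat \<Rightarrow> (nat \<times> nat) list \<Rightarrow> bool" where
  "lattice_path n r P \<longleftrightarrow> length P = Suc n \<and> P ! 0 = (0, 0) \<and> P ! n = (r, n - r) \<and>
     (\<forall>i<n. P ! Suc i = (fst (P ! i) + 1, snd (P ! i)) \<or> P ! Suc i = (fst (P ! i), snd (P ! i) + 1))"

definition N_count :: "nat \<Rightarrow> nat \<Rightarrow> nat \<Rightarrow> nat" where
  "N_count k n r = card {(P, Q). lattice_path n r P \<and> lattice_path n r Q \<and>
      card ((set P \<inter> set Q) - {(0, 0), (r, n - r)}) = k}"

text \<open>Bivariate power series Q[[y,z]] represented as (Q[[y]])[[z]]: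
  the outer variable is z, the inner variable is y.\<close>
definition Yv :: "rat fps fps" where "Yv = fps_const fps_X"
definition Zv :: "rat fps fps" where "Zv = fps_X"

definition coeff2 :: "rat fps fps \<Rightarrow> nat \<Rightarrow> nat \<Rightarrow> rat" where
  "coeff2 F a b = fps_nth (fps_nth F b) a"

definition fsqrt2 :: "rat fps fps \<Rightarrow> rat fps fps" where
  "fsqrt2 G = (THE H. H * H = G \<and> coeff2 H 0 0 = 1)"

definition f_series :: "rat fps fps" where
  "f_series = fps_const (fps_const (1/2)) *
     ((1 - Yv - Zv) - fsqrt2 ((1 - Yv - Zv)^2 - 4 * Yv * Zv))"

end

theory Submission
  imports Defs
begin

definition mkgf :: "(nat \<Rightarrow> nat \<Rightarrow> nat) \<Rightarrow> rat fps fps" where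
  "mkgf c = Abs_fps (\<lambda>b. Abs_fps (\<lambda>a. of_nat (c a b)))"

lemma coeff2_mkgf[simp]: "coeff2 (mkgf c) a b = of_nat (c a b)"
  by (simp add: mkgf_def coeff2_def)

lemma coeff2_eqI: "(\<And>a b. coeff2 F a b = coeff2 G a b) \<Longrightarrow> F = G"
  unfolding coeff2_def by (simp add: fps_eq_iff)

lemma coeff2_mult: "coeff2 (F * G) a b = (\<Sum>i\<le>a. \<Sum>j\<le>b. coeff2 F i j * coeff2 G (a-i) (b-j))"
proof -
  have "coeff2 (F * G) a b = (\<Sum>j=0..b. fps_nth (fps_nth F j * fps_nth G (b-j)) a)"
    unfolding coeff2_def fps_mult_nth fps_sum_nth ..
  also have "\<dots> = (\<Sum>j\<le>b. \<Sum>i\<le>a. coeff2 F i j * coeff2 G (a-i) (b-j))"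
    by (simp add: fps_mult_nth coeff2_def atLeast0AtMost)
  finally show ?thesis by (simp add: sum.swap[of _ "{..a}"])
qed

lemma coeff2_add[simp]: "coeff2 (F + G) a b = coeff2 F a b + coeff2 G a b"
  by (simp add: coeff2_def)
lemma coeff2_diff[simp]: "coeff2 (F - G) a b = coeff2 F a b - coeff2 G a b"
  by (simp add: coeff2_def)
lemma coeff2_one[simp]: "coeff2 1 a b = (if a = 0 \<and> b = 0 then 1 else 0)"
  by (simp add: coeff2_def)
lemma coeff2_Y[simp]: "coeff2 Yv a b = (if a = 1 \<and> b = 0 then 1 else 0)"
  by (simp add: coeff2_def Yv_def)
lemma coeff2_Z[simp]: "coeff2 Zv a b = (if a = 0 \<and> b = 1 then 1 else 0)"
  by (simp add: coeff2_def Zv_def)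
lemma coeff2_two[simp]: "coeff2 (2 * F) a b = 2 * coeff2 F a b"
  by (simp add: coeff2_def fps_numeral_fps_const)
lemma coeff2_YZ: "coeff2 (Yv * Zv * F) a b = (if a = 0 \<or> b = 0 then 0 else coeff2 F (a-1) (b-1))"
  by (simp add: coeff2_def Yv_def Zv_def mult.commute[of "fps_const fps_X"] mult.assoc)

definition stp :: "bool \<times> bool \<Rightarrow> int" where "stp x = of_bool (fst x) - of_bool (snd x)"
definition dif :: "(bool \<times> bool) list \<Rightarrow> int" where "dif ws = sum_list (map stp ws)"
definition ntr :: "(bool \<times> bool) list \<Rightarrow> nat" where "ntr ws = length (filter fst ws)"
definition touches :: "(bool \<times> bool) list \<Rightarrow> nat set" where
  "touches ws = {i. 0 < i \<and> i < length ws \<and> dif (take i ws) = 0}"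
definition prime_w :: "(bool \<times> bool) list \<Rightarrow> bool" where
  "prime_w ws \<longleftrightarrow> ws \<noteq> [] \<and> dif ws = 0 \<and> touches ws = {}"
definition Wd :: "nat \<Rightarrow> nat \<Rightarrow> (bool \<times> bool) list set" where
  "Wd a b = {ws. length ws = a + b \<and> ntr ws = a}"

lemma dif_simps[simp]: "dif [] = 0" "dif (x # xs) = stp x + dif xs" "dif (xs @ ys) = dif xs + dif ys"
  by (simp_all add: dif_def)
lemma ntr_simps[simp]: "ntr [] = 0" "ntr (x # xs) = of_bool (fst x) + ntr xs" "ntr (xs @ ys) = ntr xs + ntr ys"
  by (simp_all add: ntr_def)
lemma ntr_le: "ntr xs \<le> length xs" by (simp add: ntr_def)

lemma finite_Wd[simp]: "finite (Wd a b)"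
proof -
  have "Wd a b \<subseteq> {xs. set xs \<subseteq> UNIV \<and> length xs = a + b}" by (auto simp: Wd_def)
  moreover have "finite {xs. set xs \<subseteq> (UNIV :: (bool \<times> bool) set) \<and> length xs = a + b}"
    by (rule finite_lists_length_eq) simp
  ultimately show ?thesis by (rule finite_subset)
qed

lemma dif_take_Suc: "i < length ws \<Longrightarrow> dif (take (Suc i) ws) = dif (take i ws) + stp (ws ! i)"
  by (simp add: take_Suc_conv_app_nth)

lemma stp_range: "stp x \<le> 1" "stp x \<ge> -1" by (auto simp: stp_def)

lemma prime_prefix_free:
  assumes "prime_w u" "prime_w u'" "u @ v = u' @ v'"
  shows "u = u'"
proof -
  have "\<not> length u < length u'" if "prime_w u" "prime_w u'" "u @ v = u' @ v'" for u u' v v'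
  proof
    assume l: "length u < length u'"
    have "take (length u) u' = u" using that(3) l
      by (metis append_eq_append_conv_if append_eq_conv_conj less_imp_le_nat take_all_iff)
    hence "length u \<in> touches u'" using that(1,2) l by (auto simp: touches_def prime_w_def)
    thus False using that(2) by (simp add: prime_w_def)
  qed
  from this[of u u' v v'] this[of u' u v' v] assms have "length u = length u'" by fastforce
  thus ?thesis using assms(3) by (metis append_eq_append_conv)
qed

lemma touches_append:
  assumes "prime_w u" "v \<noteq> []"
  shows "touches (u @ v) = insert (length u) ((+) (length u) ` touches v)"
proof (rule set_eqI)
  fix i
  show "i \<in> touches (u @ v) \<longleftrightarrow> i \<in> insert (length u) ((+) (length u) ` touches v)"
  proof (cases "i < length u")
    case True
    then show ?thesis using assms by (auto simp: touches_def prime_w_def)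
  next
    case False
    then obtain j where j: "i = length u + j" by (metis le_iff_add not_less)
    have "take i (u @ v) = u @ take j v" using j by simp
    then show ?thesis using assms j
      by (auto simp: touches_def prime_w_def)
  qed
qed

lemma card_touches_append:
  assumes "prime_w u" "v \<noteq> []"
  shows "card (touches (u @ v)) = Suc (card (touches v))"
proof -
  have fin: "finite (touches v)" by (simp add: touches_def)
  have "length u \<notin> (+) (length u) ` touches v" by (auto simp: touches_def)
  moreover have "card ((+) (length u) ` touches v) = card (touches v)"
    by (rule card_image) (simp add: inj_on_def)
  ultimately show ?thesis using touches_append[OF assms] fin by simp
qed

lemma card_decomp:
  fixes A B :: "nat \<Rightarrow> nat \<Rightarrow> (bool \<times> bool) list set"
  assumes wA: "\<And>i j. A i j \<subseteq> Wd i j" and wB: "\<And>i j. B i j \<subseteq> Wd i j"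
  and uniq: "\<And>i j i' j' u v u' v'. u \<in> A i j \<Longrightarrow> u' \<in> A i' j' \<Longrightarrow> u @ v = u' @ v' \<Longrightarrow> u = u'"
  shows "card {u @ v | u v i j. i \<le> a \<and> j \<le> b \<and> u \<in> A i j \<and> v \<in> B (a-i) (b-j)}
    = (\<Sum>i\<le>a. \<Sum>j\<le>b. card (A i j) * card (B (a-i) (b-j)))"
proof -
  define F where "F p = (\<lambda>(u,v). u @ v) ` (A (fst p) (snd p) \<times> B (a - fst p) (b - snd p))" for p
  have finA: "finite (A i j)" for i j using wA finite_Wd finite_subset by metis
  have finB: "finite (B i j)" for i j using wB finite_Wd finite_subset by metis
  have eq: "{u @ v | u v i j. i \<le> a \<and> j \<le> b \<and> u \<in> A i j \<and> v \<in> B (a-i) (b-j)} = \<Union> (F ` ({..a} \<times> {..b}))"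
    unfolding F_def by (auto; fastforce)
  have inj: "inj_on (\<lambda>(u,v). u @ v) (A i j \<times> B i' j')" for i j i' j'
    by (auto simp: inj_on_def dest: uniq)
  have cardF: "card (F p) = card (A (fst p) (snd p)) * card (B (a - fst p) (b - snd p))" for p
    unfolding F_def by (subst card_image[OF inj]) (simp add: card_cartesian_product)
  have finF: "finite (F p)" for p unfolding F_def using finA finB by simp
  have disj: "F p \<inter> F q = {}" if "p \<noteq> q" for p q
  proof (rule ccontr)
    assume "F p \<inter> F q \<noteq> {}"
    then obtain u v u' v' where u: "u \<in> A (fst p) (snd p)" "u' \<in> A (fst q) (snd q)" "u @ v = u' @ v'"
      unfolding F_def by (auto; fastforce)
    then have "u = u'" using uniq by blast
    with u wA have "u \<in> Wd (fst p) (snd p)" "u \<in> Wd (fst q) (snd q)" by auto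
    then have "p = q" by (auto simp: Wd_def prod_eq_iff)
    with that show False by simp
  qed
  have "card (\<Union> (F ` ({..a} \<times> {..b}))) = (\<Sum>p\<in>{..a} \<times> {..b}. card (F p))"
    by (rule card_UN_disjoint) (simp_all add: finF disj)
  also have "\<dots> = (\<Sum>i\<le>a. \<Sum>j\<le>b. card (A i j) * card (B (a-i) (b-j)))"
    by (simp add: cardF sum.cartesian_product split_beta)
  finally show ?thesis using eq by simp
qed

lemma coeff2_mult_mkgf: "coeff2 (mkgf c * mkgf d) a b = of_nat (\<Sum>i\<le>a. \<Sum>j\<le>b. c i j * d (a-i) (b-j))"
  by (simp add: coeff2_mult)

definition Sk :: "nat \<Rightarrow> nat \<Rightarrow> nat \<Rightarrow> (bool \<times> bool) list set" where
  "Sk k a b = {ws \<in> Wd a b. ws \<noteq> [] \<and> dif ws = 0 \<and> card (touches ws) = k}"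
definition Prim :: "nat \<Rightarrow> nat \<Rightarrow> (bool \<times> bool) list set" where
  "Prim a b = {ws \<in> Wd a b. prime_w ws}"

lemma finite_touches[simp]: "finite (touches ws)" by (simp add: touches_def)

lemma Sk0: "Sk 0 a b = Prim a b"
  by (auto simp: Sk_def Prim_def prime_w_def)

lemma split_first_touch:
  assumes "touches w \<noteq> {}"
  obtains u v where "w = u @ v" "u \<noteq> []" "v \<noteq> []" "dif u = 0" "touches u = {}"
proof -
  define m where "m = Min (touches w)"
  have m: "m \<in> touches w" using assms by (simp add: m_def)
  have mmin: "\<And>i. i \<in> touches w \<Longrightarrow> m \<le> i" by (simp add: m_def)
  show ?thesis
  proof
    show "w = take m w @ drop m w" by simp
    show "take m w \<noteq> []" "drop m w \<noteq> []" "dif (take m w) = 0" using m by (auto simp: touches_def)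
    show "touches (take m w) = {}"
    proof (rule ccontr)
      assume "touches (take m w) \<noteq> {}"
      then obtain i where i: "i \<in> touches (take m w)" by blast
      then have "i \<in> touches w" "i < m" using m by (auto simp: touches_def min_def split: if_splits)
      with mmin show False by fastforce
    qed
  qed
qed

lemma Wd_append: "u \<in> Wd i j \<Longrightarrow> v \<in> Wd (a-i) (b-j) \<Longrightarrow> i \<le> a \<Longrightarrow> j \<le> b \<Longrightarrow> u @ v \<in> Wd a b"
  by (auto simp: Wd_def)

lemma Wd_split: "u @ v \<in> Wd a b \<Longrightarrow> \<exists>i j. i \<le> a \<and> j \<le> b \<and> u \<in> Wd i j \<and> v \<in> Wd (a-i) (b-j)"
proof -
  assume "u @ v \<in> Wd a b"
  then have h: "length u + length v = a + b" "ntr u + ntr v = a" by (auto simp: Wd_def)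
  show ?thesis
    apply (rule exI[of _ "ntr u"], rule exI[of _ "length u - ntr u"])
    using h ntr_le[of u] ntr_le[of v] unfolding Wd_def by simp linarith
qed

lemma Sk_Suc: "Sk (Suc k) a b = {u @ v | u v i j. i \<le> a \<and> j \<le> b \<and> u \<in> Prim i j \<and> v \<in> Sk k (a-i) (b-j)}"
proof (rule set_eqI, rule iffI)
  fix w assume w: "w \<in> Sk (Suc k) a b"
  then have "touches w \<noteq> {}" by (auto simp: Sk_def)
  then obtain u v where uv: "w = u @ v" "u \<noteq> []" "v \<noteq> []" "dif u = 0" "touches u = {}"
    by (rule split_first_touch)
  then have pu: "prime_w u" by (simp add: prime_w_def)
  from w uv pu have "card (touches v) = k" "dif v = 0"
    by (auto simp: Sk_def card_touches_append)
  moreover have "u @ v \<in> Wd a b" using w uv(1) by (simp add: Sk_def)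
  then obtain i j where "i \<le> a" "j \<le> b" "u \<in> Wd i j" "v \<in> Wd (a-i) (b-j)"
    using Wd_split by blast
  ultimately show "w \<in> {u @ v | u v i j. i \<le> a \<and> j \<le> b \<and> u \<in> Prim i j \<and> v \<in> Sk k (a-i) (b-j)}"
    using uv pu by (auto simp: Sk_def Prim_def)
next
  fix w assume "w \<in> {u @ v | u v i j. i \<le> a \<and> j \<le> b \<and> u \<in> Prim i j \<and> v \<in> Sk k (a-i) (b-j)}"
  then obtain u v i j where "w = u @ v" "i \<le> a" "j \<le> b" "u \<in> Prim i j" "v \<in> Sk k (a-i) (b-j)"
    by blast
  then show "w \<in> Sk (Suc k) a b"
    by (auto simp: Sk_def Prim_def card_touches_append prime_w_def intro: Wd_append)
qed

definition cP :: "rat fps fps" where "cP = mkgf (\<lambda>a b. card (Prim a b))"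

lemma cS_pow: "mkgf (\<lambda>a b. card (Sk k a b)) = cP ^ (k + 1)"
proof (induction k)
  case 0
  then show ?case by (simp add: Sk0 cP_def)
next
  case (Suc k)
  have "mkgf (\<lambda>a b. card (Sk (Suc k) a b)) = cP * mkgf (\<lambda>a b. card (Sk k a b))"
  proof (rule coeff2_eqI)
    fix a b
    have "card (Sk (Suc k) a b) = (\<Sum>i\<le>a. \<Sum>j\<le>b. card (Prim i j) * card (Sk k (a-i) (b-j)))"
      unfolding Sk_Suc
      by (rule card_decomp) (auto simp: Prim_def Sk_def intro: prime_prefix_free)
    then show "coeff2 (mkgf (\<lambda>a b. card (Sk (Suc k) a b))) a b = coeff2 (cP * mkgf (\<lambda>a b. card (Sk k a b))) a b"
      by (simp add: cP_def coeff2_mult_mkgf)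
  qed
  then show ?case using Suc by simp
qed

definition posw :: "(bool \<times> bool) list \<Rightarrow> bool" where
  "posw ws \<longleftrightarrow> 2 \<le> length ws \<and> dif ws = 0 \<and> (\<forall>i. 0 < i \<and> i < length ws \<longrightarrow> dif (take i ws) > 0)"
definition Pos :: "nat \<Rightarrow> nat \<Rightarrow> (bool \<times> bool) list set" where
  "Pos a b = {ws \<in> Wd a b. posw ws}"
definition Wk :: "nat \<Rightarrow> nat \<Rightarrow> (bool \<times> bool) list set" where
  "Wk a b = {ws \<in> Wd a b. dif ws = 0 \<and> (\<forall>i \<le> length ws. dif (take i ws) \<ge> 0)}"
definition WP :: "nat \<Rightarrow> nat \<Rightarrow> (bool \<times> bool) list set" where
  "WP a b = {ws \<in> Wk a b. prime_w ws}"
definition Lev :: "nat \<Rightarrow> nat \<Rightarrow> (bool \<times> bool) list set" where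
  "Lev a b = {ws \<in> Wd a b. length ws = 1 \<and> dif ws = 0}"

lemma stp0: "stp x = 0 \<longleftrightarrow> x = (True,True) \<or> x = (False,False)"
  by (cases x) (auto simp: stp_def)
lemma len1: "length ws = 1 \<longleftrightarrow> (\<exists>x. ws = [x])"
  by (cases ws) auto
lemma Lev_mem: "ws \<in> Lev a b \<longleftrightarrow> (\<exists>x. ws = [x] \<and> (x = (True,True) \<or> x = (False,False)) \<and> of_bool (fst x) = a \<and> a + b = 1)"
proof
  assume "ws \<in> Lev a b"
  then have h: "length ws = a + b" "ntr ws = a" "length ws = 1" "dif ws = 0" by (auto simp: Lev_def Wd_def)
  from h(3) obtain x where x: "ws = [x]" unfolding len1 by blast
  show "\<exists>x. ws = [x] \<and> (x = (True,True) \<or> x = (False,False)) \<and> of_bool (fst x) = a \<and> a + b = 1"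
    apply (rule exI[of _ x])
    using h unfolding x stp0[symmetric] by simp
next
  assume "\<exists>x. ws = [x] \<and> (x = (True,True) \<or> x = (False,False)) \<and> of_bool (fst x) = a \<and> a + b = 1"
  then obtain x where x: "ws = [x]" "x = (True,True) \<or> x = (False,False)" "of_bool (fst x) = a" "a + b = 1"
    by blast
  have "stp x = 0" using x(2) stp0 by blast
  then show "ws \<in> Lev a b" using x(1,3,4) unfolding Lev_def Wd_def by simp
qed

lemma Lev_eq: "Lev a b = (if a = 1 \<and> b = 0 then {[(True,True)]} else if a = 0 \<and> b = 1 then {[(False,False)]} else {})"
proof (intro set_eqI)
  fix ws
  consider "a = 1 \<and> b = 0" | "a = 0 \<and> b = 1" | "\<not> (a = 1 \<and> b = 0)" "\<not> (a = 0 \<and> b = 1)" by blast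
  then show "ws \<in> Lev a b \<longleftrightarrow> ws \<in> (if a = 1 \<and> b = 0 then {[(True,True)]} else if a = 0 \<and> b = 1 then {[(False,False)]} else {})"
  proof cases
    case 1 then show ?thesis unfolding Lev_mem by auto
  next
    case 2 then show ?thesis unfolding Lev_mem by auto
  next
    case 3
    have "\<not> (\<exists>x. ws = [x] \<and> (x = (True,True) \<or> x = (False,False)) \<and> of_bool (fst x) = a \<and> a + b = 1)"
    proof
      assume "\<exists>x. ws = [x] \<and> (x = (True,True) \<or> x = (False,False)) \<and> of_bool (fst x) = a \<and> a + b = 1"
      then obtain x where "(x = (True,True) \<or> x = (False,False))" "of_bool (fst x) = a" "a + b = 1" by blast
      then show False using 3 by (cases x) auto
    qed
    then show ?thesis using 3 unfolding Lev_mem by (simp only: if_False) simp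
  qed
qed

lemma card_Lev: "card (Lev a b) = (if a = 1 \<and> b = 0 then 1 else 0) + (if a = 0 \<and> b = 1 then 1 else 0)"
  by (simp add: Lev_eq)

lemma stp_swap[simp]: "stp (prod.swap x) = - stp x" by (simp add: stp_def)
lemma dif_swap[simp]: "dif (map prod.swap ws) = - dif ws" by (induction ws) auto
lemma dif_ntr: "dif ws = int (ntr ws) - int (ntr (map prod.swap ws))"
  by (induction ws) (auto simp: stp_def)
lemma touches_swap[simp]: "touches (map prod.swap ws) = touches ws"
  by (simp add: touches_def take_map)
lemma prime_swap[simp]: "prime_w (map prod.swap ws) = prime_w ws"
  by (simp add: prime_w_def)
lemma Wd_swap: "dif u = 0 \<Longrightarrow> (map prod.swap u \<in> Wd a b) = (u \<in> Wd a b)"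
  using dif_ntr[of u] by (simp add: Wd_def)
lemma swap_swap_list[simp]: "map prod.swap (map prod.swap u) = u" by (induction u) auto

lemma ivt_pos:
  assumes "\<forall>i. 0 < i \<and> i < length ws \<longrightarrow> dif (take i ws) \<noteq> 0" "dif (take 1 ws) > 0"
  shows "0 < i \<Longrightarrow> i < length ws \<Longrightarrow> dif (take i ws) > 0"
proof (induction i)
  case 0 then show ?case by simp
next
  case (Suc i)
  show ?case
  proof (cases "i = 0")
    case True then show ?thesis using assms(2) by simp
  next
    case False
    then have "dif (take i ws) > 0" using Suc by simp
    moreover have "dif (take (Suc i) ws) = dif (take i ws) + stp (ws ! i)"
      using Suc by (simp add: dif_take_Suc)
    moreover have "dif (take (Suc i) ws) \<noteq> 0" using assms(1) Suc by blast
    ultimately show ?thesis using stp_range(2)[of "ws ! i"] by linarith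
  qed
qed

lemma posw_prime: "posw u \<Longrightarrow> prime_w u"
  by (auto simp: posw_def prime_w_def touches_def)

lemma prime_cases:
  assumes "prime_w ws" "2 \<le> length ws"
  shows "posw ws \<or> posw (map prod.swap ws)"
proof -
  have nz: "\<forall>i. 0 < i \<and> i < length ws \<longrightarrow> dif (take i ws) \<noteq> 0"
    using assms by (auto simp: prime_w_def touches_def)
  have d0: "dif ws = 0" using assms by (simp add: prime_w_def)
  have "dif (take 1 ws) \<noteq> 0" using nz assms(2) by simp
  then consider "dif (take 1 ws) > 0" | "dif (take 1 (map prod.swap ws)) > 0"
    by (simp add: take_map) linarith
  then show ?thesis
  proof cases
    case 1
    then show ?thesis using ivt_pos[OF nz 1] assms(2) d0 by (simp add: posw_def)
  next
    case 2
    have nz': "\<forall>i. 0 < i \<and> i < length (map prod.swap ws) \<longrightarrow> dif (take i (map prod.swap ws)) \<noteq> 0"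
      using nz by (simp add: take_map)
    show ?thesis using ivt_pos[OF nz' 2] assms(2) d0 by (simp add: posw_def)
  qed
qed

lemma Prim_eq: "Prim a b = Lev a b \<union> Pos a b \<union> map prod.swap ` Pos a b"
proof (rule set_eqI, rule iffI)
  fix ws assume ws: "ws \<in> Prim a b"
  then have p: "prime_w ws" "ws \<in> Wd a b" by (auto simp: Prim_def)
  show "ws \<in> Lev a b \<union> Pos a b \<union> map prod.swap ` Pos a b"
  proof (cases "length ws = 1")
    case True then show ?thesis using p by (auto simp: Lev_def prime_w_def)
  next
    case False
    moreover have "ws \<noteq> []" using p by (simp add: prime_w_def)
    ultimately have "2 \<le> length ws" by (cases ws) (auto simp: Suc_le_eq)
    from prime_cases[OF p(1) this] show ?thesis
    proof
      assume "posw ws" then show ?thesis using p by (auto simp: Pos_def)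
    next
      assume "posw (map prod.swap ws)"
      moreover have "map prod.swap ws \<in> Wd a b" using p Wd_swap by (simp add: prime_w_def)
      ultimately have "map prod.swap ws \<in> Pos a b" by (simp add: Pos_def)
      then have "map prod.swap (map prod.swap ws) \<in> map prod.swap ` Pos a b" by blast
      then show ?thesis by simp
    qed
  qed
next
  fix ws assume "ws \<in> Lev a b \<union> Pos a b \<union> map prod.swap ` Pos a b"
  then show "ws \<in> Prim a b"
  proof (elim UnE)
    assume "ws \<in> Lev a b" then show ?thesis
      by (auto simp: Lev_def Prim_def prime_w_def touches_def)
  next
    assume "ws \<in> Pos a b" then show ?thesis by (auto simp: Pos_def Prim_def posw_prime)
  next
    assume "ws \<in> map prod.swap ` Pos a b"
    then obtain u where "ws = map prod.swap u" "u \<in> Pos a b" by blast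
    then show ?thesis using Wd_swap[of u] by (auto simp: Pos_def Prim_def posw_prime posw_def)
  qed
qed

lemma card_Prim: "card (Prim a b) = card (Lev a b) + 2 * card (Pos a b)"
proof -
  have fin: "finite (Lev a b)" "finite (Pos a b)"
    by (auto simp: Lev_def Pos_def intro: finite_subset[OF _ finite_Wd])
  have inj: "inj_on (map prod.swap) (Pos a b)"
    by (metis inj_on_inverseI swap_swap_list)
  have d1: "Lev a b \<inter> Pos a b = {}" by (auto simp: Lev_def Pos_def posw_def)
  have d2: "(Lev a b \<union> Pos a b) \<inter> map prod.swap ` Pos a b = {}"
  proof -
    have "False" if "u \<in> Pos a b" "map prod.swap u \<in> Lev a b \<union> Pos a b" for u
    proof -
      have "dif (take 1 u) > 0" using that(1) by (auto simp: Pos_def posw_def)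
      moreover have "length u \<ge> 2" using that(1) by (auto simp: Pos_def posw_def)
      ultimately show False using that(2) by (auto simp: Lev_def Pos_def posw_def take_map)
    qed
    then show ?thesis by blast
  qed
  have "card (Prim a b) = card (Lev a b \<union> Pos a b) + card (map prod.swap ` Pos a b)"
    unfolding Prim_eq by (rule card_Un_disjoint) (use fin d2 in auto)
  also have "\<dots> = card (Lev a b) + card (Pos a b) + card (Pos a b)"
    using card_Un_disjoint[OF fin d1] card_image[OF inj] by simp
  finally show ?thesis by simp
qed

lemma WP_eq: "WP a b = Lev a b \<union> Pos a b"
proof (rule set_eqI, rule iffI)
  fix ws assume ws: "ws \<in> WP a b"
  then have p: "prime_w ws" "ws \<in> Wk a b" by (auto simp: WP_def)
  show "ws \<in> Lev a b \<union> Pos a b"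
  proof (cases "length ws = 1")
    case True then show ?thesis using p unfolding Lev_def prime_w_def Wk_def by blast
  next
    case False
    moreover have "ws \<noteq> []" using p by (simp add: prime_w_def)
    ultimately have l2: "2 \<le> length ws" by (cases ws) (auto simp: Suc_le_eq)
    from prime_cases[OF p(1) this] show ?thesis
    proof
      assume "posw ws" then show ?thesis using p by (auto simp: Pos_def Wk_def)
    next
      assume "posw (map prod.swap ws)"
      then have "dif (take 1 ws) < 0" by (auto simp: posw_def take_map)
      moreover have "dif (take 1 ws) \<ge> 0" using p l2 by (auto simp: Wk_def)
      ultimately show ?thesis by simp
    qed
  qed
next
  fix ws assume "ws \<in> Lev a b \<union> Pos a b"
  then show "ws \<in> WP a b"
  proof
    assume l: "ws \<in> Lev a b"
    then have l1: "length ws = 1" "dif ws = 0" "ws \<in> Wd a b" unfolding Lev_def by blast+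
    have "dif (take i ws) \<ge> 0" if "i \<le> length ws" for i
    proof -
      have "i = 0 \<or> i = 1" using that l1(1) by linarith
      then show ?thesis using l1 by auto
    qed
    moreover have "touches ws = {}" using l1(1) unfolding touches_def by auto
    ultimately show ?thesis using l1 unfolding WP_def Wk_def prime_w_def by auto
  next
    assume a: "ws \<in> Pos a b"
    have "dif (take i ws) \<ge> 0" if ii: "i \<le> length ws" for i
    proof -
      have pw: "posw ws" using a by (simp add: Pos_def)
      consider "i = 0" | "i = length ws" | "0 < i \<and> i < length ws" using ii by linarith
      then show ?thesis
      proof cases
        case 1 then show ?thesis by simp
      next
        case 2 then show ?thesis using pw by (simp add: posw_def)
      next
        case 3 then show ?thesis using pw unfolding posw_def by force
      qed
    qed
    then show ?thesis using a by (auto simp: Pos_def WP_def Wk_def posw_prime posw_def)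
  qed
qed

lemma card_WP: "card (WP a b) = card (Lev a b) + card (Pos a b)"
proof -
  have fin: "finite (Lev a b)" "finite (Pos a b)"
    by (auto simp: Lev_def Pos_def intro: finite_subset[OF _ finite_Wd])
  have d1: "Lev a b \<inter> Pos a b = {}" by (auto simp: Lev_def Pos_def posw_def)
  show ?thesis unfolding WP_eq by (rule card_Un_disjoint[OF fin d1])
qed

lemma dif_take_append: "dif (take i (u @ v)) = dif (take i u) + dif (take (i - length u) v)"
  by simp

lemma Wk_nil: "[] \<in> Wk 0 0" by (simp add: Wk_def Wd_def)

lemma Wk_decomp: "Wk a b = {ws \<in> Wk a b. ws = []} \<union>
   {u @ v | u v i j. i \<le> a \<and> j \<le> b \<and> u \<in> WP i j \<and> v \<in> Wk (a-i) (b-j)}"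
proof (rule set_eqI, rule iffI)
  fix w assume w: "w \<in> Wk a b"
  then have wd: "w \<in> Wd a b" "dif w = 0" "\<And>i. i \<le> length w \<Longrightarrow> dif (take i w) \<ge> 0"
    by (auto simp: Wk_def)
  show "w \<in> {ws \<in> Wk a b. ws = []} \<union>
   {u @ v | u v i j. i \<le> a \<and> j \<le> b \<and> u \<in> WP i j \<and> v \<in> Wk (a-i) (b-j)}"
  proof (cases "w = []")
    case True then show ?thesis using w by blast
  next
    case False
    show ?thesis
    proof (cases "touches w = {}")
      case True
      then have "w \<in> WP a b" using w False by (simp add: WP_def prime_w_def Wk_def)
      moreover have "w = w @ []" by simp
      ultimately have "\<exists>u v i j. w = u @ v \<and> i \<le> a \<and> j \<le> b \<and> u \<in> WP i j \<and> v \<in> Wk (a-i) (b-j)"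
        using Wk_nil by (metis diff_self_eq_0 order_refl)
      then show ?thesis by blast
    next
      case nt: False
      then obtain u v where uv: "w = u @ v" "u \<noteq> []" "v \<noteq> []" "dif u = 0" "touches u = {}"
        by (rule split_first_touch)
      obtain i j where ij: "i \<le> a" "j \<le> b" "u \<in> Wd i j" "v \<in> Wd (a-i) (b-j)"
        using Wd_split wd(1) uv(1) by blast
      have "dif (take k u) \<ge> 0" if "k \<le> length u" for k
        using wd(3)[of k] that uv(1) by simp
      then have "u \<in> WP i j" using uv ij by (simp add: WP_def Wk_def prime_w_def)
      moreover have "dif (take k v) \<ge> 0" if "k \<le> length v" for k
        using wd(3)[of "length u + k"] that uv(1,4) by simp
      then have "v \<in> Wk (a-i) (b-j)" using uv ij wd(2) by (simp add: Wk_def)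
      ultimately show ?thesis using ij uv(1) by blast
    qed
  qed
next
  fix w assume "w \<in> {ws \<in> Wk a b. ws = []} \<union>
   {u @ v | u v i j. i \<le> a \<and> j \<le> b \<and> u \<in> WP i j \<and> v \<in> Wk (a-i) (b-j)}"
  then show "w \<in> Wk a b"
  proof
    assume "w \<in> {ws \<in> Wk a b. ws = []}" then show ?thesis by blast
  next
    assume "w \<in> {u @ v | u v i j. i \<le> a \<and> j \<le> b \<and> u \<in> WP i j \<and> v \<in> Wk (a-i) (b-j)}"
    then obtain u v i j where h: "w = u @ v" "i \<le> a" "j \<le> b" "u \<in> WP i j" "v \<in> Wk (a-i) (b-j)"
      by blast
    have u: "u \<in> Wd i j" "dif u = 0" "\<And>k. k \<le> length u \<Longrightarrow> dif (take k u) \<ge> 0"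
      using h(4) by (auto simp: WP_def Wk_def)
    have v: "v \<in> Wd (a-i) (b-j)" "dif v = 0" "\<And>k. k \<le> length v \<Longrightarrow> dif (take k v) \<ge> 0"
      using h(5) by (auto simp: Wk_def)
    have "dif (take k w) \<ge> 0" if "k \<le> length w" for k
    proof (cases "k \<le> length u")
      case True then show ?thesis using u(3)[of k] h(1) by simp
    next
      case False then show ?thesis using v(3)[of "k - length u"] h(1) that u(2) by simp
    qed
    then show ?thesis using h u v Wd_append by (simp add: Wk_def)
  qed
qed

lemma card_Wk: "card (Wk a b) = (if a = 0 \<and> b = 0 then 1 else 0) +
   (\<Sum>i\<le>a. \<Sum>j\<le>b. card (WP i j) * card (Wk (a-i) (b-j)))"
proof -
  have "[] \<in> Wk a b \<Longrightarrow> a = 0 \<and> b = 0" by (simp add: Wk_def Wd_def)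
  then have e: "{ws \<in> Wk a b. ws = []} = (if a = 0 \<and> b = 0 then {[]} else {})"
    using Wk_nil by auto
  let ?C = "{u @ v | u v i j. i \<le> a \<and> j \<le> b \<and> u \<in> WP i j \<and> v \<in> Wk (a-i) (b-j)}"
  have "?C \<subseteq> {ws \<in> Wk a b. ws = []} \<union> ?C" by (rule Un_upper2)
  also have "\<dots> = Wk a b" by (rule Wk_decomp[symmetric])
  finally have sub: "?C \<subseteq> Wk a b" .
  have "Wk a b \<subseteq> Wd a b" by (auto simp: Wk_def)
  then have finC: "finite ?C" by (rule finite_subset[OF subset_trans[OF sub] finite_Wd])
  have d: "{ws \<in> Wk a b. ws = []} \<inter> ?C = {}" by (auto simp: WP_def prime_w_def)
  have "card (Wk a b) = card ({ws \<in> Wk a b. ws = []} \<union> ?C)"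
    by (rule arg_cong[where f=card, OF Wk_decomp])
  also have "\<dots> = card {ws \<in> Wk a b. ws = []} + card ?C"
    by (rule card_Un_disjoint) (simp add: e, rule finC, rule d)
  also have "card ?C = (\<Sum>i\<le>a. \<Sum>j\<le>b. card (WP i j) * card (Wk (a-i) (b-j)))"
  proof (rule card_decomp)
    show "WP i j \<subseteq> Wd i j" for i j unfolding WP_def Wk_def by blast
    show "Wk i j \<subseteq> Wd i j" for i j unfolding Wk_def by blast
    show "u = u'" if "u \<in> WP i j" "u' \<in> WP i' j'" "u @ v = u' @ v'" for i j i' j' u v u' v'
      using that prime_prefix_free unfolding WP_def by blast
  qed
  finally show ?thesis by (simp add: e)
qed

lemma stp_pos: "stp x > 0 \<longleftrightarrow> x = (True, False)" by (cases x) (auto simp: stp_def)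
lemma stp_neg: "stp x < 0 \<longleftrightarrow> x = (False, True)" by (cases x) (auto simp: stp_def)

lemma Pos_char: "ws \<in> Pos a b \<longleftrightarrow>
  (1 \<le> a \<and> 1 \<le> b \<and> (\<exists>v \<in> Wk (a-1) (b-1). ws = (True,False) # v @ [(False,True)]))"
proof
  assume ws: "ws \<in> Pos a b"
  then have p: "ws \<in> Wd a b" "2 \<le> length ws" "dif ws = 0"
    "\<And>i. 0 < i \<Longrightarrow> i < length ws \<Longrightarrow> dif (take i ws) > 0"
    by (auto simp: Pos_def posw_def)
  obtain x ws' where ws1: "ws = x # ws'" using p(2) by (cases ws) auto
  then have "ws' \<noteq> []" using p(2) by auto
  then obtain v y where "ws' = v @ [y]" by (cases ws' rule: rev_exhaust) auto
  with ws1 have wsd: "ws = x # v @ [y]" by simp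
  have "dif (take 1 ws) > 0" using p(4)[of 1] p(2) by simp
  then have x: "x = (True, False)" using wsd stp_pos by simp
  have "dif (take (Suc (length v)) ws) > 0" using p(4)[of "Suc (length v)"] wsd by simp
  then have "stp x + dif v > 0" using wsd by simp
  then have "stp y < 0" using p(3) wsd by simp
  then have y: "y = (False, True)" using stp_neg by simp
  have dv: "dif v = 0" using p(3) wsd x y by (simp add: stp_def)
  have pre: "dif (take j v) \<ge> 0" if "j \<le> length v" for j
  proof -
    have "dif (take (Suc j) ws) > 0" using p(4)[of "Suc j"] that wsd by simp
    moreover have "take (Suc j) ws = x # take j v" using that wsd by simp
    ultimately show ?thesis using x by (simp add: stp_def)
  qed
  have w: "length ws = a + b" "ntr ws = a" using p(1) by (auto simp: Wd_def)
  then have "ntr v + 1 = a" "length v + 2 = a + b" using wsd x y by auto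
  moreover have "ntr v \<le> length v" by (rule ntr_le)
  ultimately have "1 \<le> a" "1 \<le> b" "v \<in> Wd (a-1) (b-1)" by (auto simp: Wd_def)
  then show "1 \<le> a \<and> 1 \<le> b \<and> (\<exists>v \<in> Wk (a-1) (b-1). ws = (True,False) # v @ [(False,True)])"
    using dv pre wsd x y by (auto simp: Wk_def)
next
  assume "1 \<le> a \<and> 1 \<le> b \<and> (\<exists>v \<in> Wk (a-1) (b-1). ws = (True,False) # v @ [(False,True)])"
  then obtain v where h: "1 \<le> a" "1 \<le> b" "v \<in> Wk (a-1) (b-1)" "ws = (True,False) # v @ [(False,True)]"
    by blast
  have v: "v \<in> Wd (a-1) (b-1)" "dif v = 0" "\<And>k. k \<le> length v \<Longrightarrow> dif (take k v) \<ge> 0"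
    using h(3) by (auto simp: Wk_def)
  have "dif (take i ws) > 0" if i0: "0 < i" "i < length ws" for i
  proof -
    obtain j where j: "i = Suc j" using i0(1) by (cases i) auto
    have "j \<le> length v" using i0(2) h(4) j by simp
    then have "take i ws = (True,False) # take j v" using h(4) j by simp
    then show ?thesis using v(3)[OF \<open>j \<le> length v\<close>] by (simp add: stp_def)
  qed
  moreover have "ws \<in> Wd a b" using v(1) h by (auto simp: Wd_def)
  ultimately show "ws \<in> Pos a b" using h(4) v(2) by (auto simp: Pos_def posw_def stp_def)
qed

lemma card_Pos: "card (Pos a b) = (if a = 0 \<or> b = 0 then 0 else card (Wk (a-1) (b-1)))"
proof (cases "a = 0 \<or> b = 0")
  case True
  then have "Pos a b = {}" using Pos_char by fastforce
  then show ?thesis using True by simp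
next
  case False
  let ?g = "\<lambda>v. (True,False) # v @ [(False,True)]"
  have "Pos a b = ?g ` Wk (a-1) (b-1)" using False Pos_char by fastforce
  moreover have "inj_on ?g (Wk (a-1) (b-1))" by (auto simp: inj_on_def)
  ultimately show ?thesis using False by (simp add: card_image)
qed

definition fP :: "rat fps fps" where "fP = mkgf (\<lambda>a b. card (Pos a b))"
definition Wg :: "rat fps fps" where "Wg = mkgf (\<lambda>a b. card (Wk a b))"

lemma cP_eq: "cP = Yv + Zv + 2 * fP"
  by (rule coeff2_eqI) (simp add: cP_def fP_def card_Prim card_Lev)

lemma WPg: "mkgf (\<lambda>a b. card (WP a b)) = Yv + Zv + fP"
  by (rule coeff2_eqI) (simp add: fP_def card_WP card_Lev)

lemma fP_eq: "fP = Yv * Zv * Wg"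
  by (rule coeff2_eqI) (simp add: coeff2_YZ fP_def Wg_def card_Pos)

lemma Wg_eq: "Wg = 1 + (Yv + Zv + fP) * Wg"
proof (rule coeff2_eqI)
  fix a b
  have "coeff2 ((Yv + Zv + fP) * Wg) a b = coeff2 (mkgf (\<lambda>a b. card (WP a b)) * mkgf (\<lambda>a b. card (Wk a b))) a b"
    by (simp only: WPg Wg_def)
  also have "\<dots> = of_nat (\<Sum>i\<le>a. \<Sum>j\<le>b. card (WP i j) * card (Wk (a-i) (b-j)))"
    by (rule coeff2_mult_mkgf)
  finally show "coeff2 Wg a b = coeff2 (1 + (Yv + Zv + fP) * Wg) a b"
    by (simp add: Wg_def card_Wk[of a b])
qed

lemma quad_abs:
  fixes f y z w :: "'a :: comm_ring_1"
  assumes "f = y * z * w" "w = 1 + (y + z + f) * w"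
  shows "f = (y + f) * (z + f)"
proof -
  have "y * z * w = y * z * (1 + (y + z + f) * w)" using assms(2) by simp
  also have "\<dots> = y * z + (y + z + f) * (y * z * w)" by (simp add: algebra_simps)
  finally have "f = y * z + (y + z + f) * f" using assms(1) by simp
  then show ?thesis by (simp add: algebra_simps)
qed

lemma sq_abs:
  fixes f y z :: "'a :: comm_ring_1"
  assumes "f = (y + f) * (z + f)"
  shows "(1 - y - z - 2 * f) * (1 - y - z - 2 * f) = (1 - y - z)^2 - 4 * y * z"
proof -
  have "(1 - y - z - 2 * f) * (1 - y - z - 2 * f) - ((1 - y - z)^2 - 4 * y * z) = 4 * ((y + f) * (z + f) - f)"
    by (simp add: algebra_simps power2_eq_square)
  then show ?thesis using assms by simp
qed

lemma fP_quad: "fP = (Yv + fP) * (Zv + fP)"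
  by (rule quad_abs[OF fP_eq Wg_eq])

lemma coeff2_cc: "coeff2 (fps_const (fps_const c) * F) a b = c * coeff2 F a b"
  by (simp add: coeff2_def)

lemma card_Pos00: "card (Pos 0 0) = 0" by (simp add: card_Pos)

lemma f_series_eq: "f_series = fP"
proof -
  define H where "H = 1 - Yv - Zv - 2 * fP"
  have HH: "H * H = (1 - Yv - Zv)^2 - 4 * Yv * Zv"
    unfolding H_def by (rule sq_abs[OF fP_quad])
  have H0: "coeff2 H 0 0 = 1" by (simp add: H_def fP_def card_Pos00)
  have "fsqrt2 ((1 - Yv - Zv)^2 - 4 * Yv * Zv) = H"
    unfolding fsqrt2_def
  proof (rule the_equality)
    show "H * H = (1 - Yv - Zv)\<^sup>2 - 4 * Yv * Zv \<and> coeff2 H 0 0 = 1" using HH H0 by simp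
  next
    fix H' assume h: "H' * H' = (1 - Yv - Zv)\<^sup>2 - 4 * Yv * Zv \<and> coeff2 H' 0 0 = 1"
    have "(H' - H) * (H' + H) = H' * H' - H * H" by (simp add: algebra_simps)
    also have "\<dots> = 0" using h HH by simp
    finally have "(H' - H) * (H' + H) = 0" .
    moreover have "H' + H \<noteq> 0"
    proof
      assume "H' + H = 0"
      then have "coeff2 (H' + H) 0 0 = 0" by (simp add: coeff2_def)
      then show False using h H0 by simp
    qed
    ultimately show "H' = H" by simp
  qed
  then have "f_series = fps_const (fps_const (1/2)) * ((1 - Yv - Zv) - H)"
    by (simp add: f_series_def)
  also have "(1 - Yv - Zv) - H = 2 * fP" by (simp add: H_def)
  finally have e: "f_series = fps_const (fps_const (1/2)) * (2 * fP)" .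
  show ?thesis unfolding e by (intro coeff2_eqI) (simp add: coeff2_cc)
qed

definition cnt :: "bool list \<Rightarrow> nat" where "cnt p = length (filter id p)"
definition pth :: "bool list \<Rightarrow> (nat \<times> nat) list" where
  "pth p = map (\<lambda>i. (cnt (take i p), i - cnt (take i p))) [0..<Suc (length p)]"

lemma length_pth[simp]: "length (pth p) = Suc (length p)" by (simp add: pth_def)
lemma pth_nth: "i \<le> length p \<Longrightarrow> pth p ! i = (cnt (take i p), i - cnt (take i p))"
  by (simp add: pth_def nth_append del: upt_Suc)
lemma cnt_le: "cnt p \<le> length p" by (simp add: cnt_def)
lemma cnt_take_le: "cnt (take i p) \<le> i"
  using cnt_le[of "take i p"] by simp
lemma cnt_take_Suc: "i < length p \<Longrightarrow> cnt (take (Suc i) p) = cnt (take i p) + of_bool (p ! i)"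
  by (simp add: cnt_def take_Suc_conv_app_nth)
lemma pth_sum: "i \<le> length p \<Longrightarrow> fst (pth p ! i) + snd (pth p ! i) = i"
  using cnt_take_le[of i p] by (simp add: pth_nth)

lemma pth_lattice: "length p = n \<Longrightarrow> cnt p = r \<Longrightarrow> lattice_path n r (pth p)"
  unfolding lattice_path_def
proof (intro conjI allI impI)
  assume h: "length p = n" "cnt p = r"
  show "length (pth p) = Suc n" using h by simp
  show "pth p ! 0 = (0, 0)" by (simp add: pth_nth cnt_def)
  show "pth p ! n = (r, n - r)" using h by (simp add: pth_nth)
  fix i assume i: "i < n"
  have c: "cnt (take i p) \<le> i" by (rule cnt_take_le)
  show "pth p ! Suc i = (fst (pth p ! i) + 1, snd (pth p ! i)) \<or>
        pth p ! Suc i = (fst (pth p ! i), snd (pth p ! i) + 1)"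
    using i h c by (cases "p ! i") (simp_all add: pth_nth cnt_take_Suc)
qed

lemma lattice_pth:
  assumes "lattice_path n r P"
  shows "\<exists>p. length p = n \<and> cnt p = r \<and> P = pth p"
proof -
  have L: "length P = Suc n" "P ! 0 = (0, 0)" "P ! n = (r, n - r)"
    "\<And>i. i < n \<Longrightarrow> P ! Suc i = (fst (P ! i) + 1, snd (P ! i)) \<or> P ! Suc i = (fst (P ! i), snd (P ! i) + 1)"
    using assms by (auto simp: lattice_path_def)
  define p where "p = map (\<lambda>i. fst (P ! Suc i) = Suc (fst (P ! i))) [0..<n]"
  have lp: "length p = n" by (simp add: p_def)
  have key: "i \<le> n \<Longrightarrow> P ! i = (cnt (take i p), i - cnt (take i p)) \<and> cnt (take i p) \<le> i" for i
  proof (induction i)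
    case 0 then show ?case using L(2) by (simp add: cnt_def)
  next
    case (Suc i)
    then have IH: "P ! i = (cnt (take i p), i - cnt (take i p))" "cnt (take i p) \<le> i" by auto
    have il: "i < n" using Suc by simp
    have pi: "p ! i = (fst (P ! Suc i) = Suc (fst (P ! i)))" using il by (simp add: p_def)
    have cs: "cnt (take (Suc i) p) = cnt (take i p) + of_bool (p ! i)" using il lp by (simp add: cnt_take_Suc)
    from L(4)[OF il] show ?case
    proof
      assume a: "P ! Suc i = (fst (P ! i) + 1, snd (P ! i))"
      then have "p ! i" using pi by simp
      then show ?thesis using a IH cs by simp
    next
      assume a: "P ! Suc i = (fst (P ! i), snd (P ! i) + 1)"
      then have "\<not> p ! i" using pi by simp
      then show ?thesis using a IH cs by simp
    qed
  qed
  have "P = pth p"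
  proof (rule nth_equalityI)
    show "length P = length (pth p)" using L(1) lp by simp
    fix i assume "i < length P"
    then have "i \<le> n" using L(1) by simp
    then show "P ! i = pth p ! i" using key lp by (simp add: pth_nth)
  qed
  moreover have "cnt p = r" using key[of n] L(3) lp by simp
  ultimately show ?thesis using lp by blast
qed

lemma pth_inj:
  assumes "length p = length p'" "pth p = pth p'"
  shows "p = p'"
proof (rule nth_equalityI)
  show "length p = length p'" by fact
  fix i assume i: "i < length p"
  have "pth p ! i = pth p' ! i" "pth p ! Suc i = pth p' ! Suc i" using assms by auto
  then have "cnt (take i p) = cnt (take i p')" "cnt (take (Suc i) p) = cnt (take (Suc i) p')"
    using i assms(1) by (auto simp: pth_nth)
  then show "p ! i = p' ! i" using i assms(1) by (cases "p ! i"; cases "p' ! i") (auto simp: cnt_take_Suc)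
qed

lemma ntr_cnt: "ntr xs = cnt (map fst xs)" by (simp add: ntr_def cnt_def filter_map comp_def)
lemma ntr_swap_cnt: "ntr (map prod.swap xs) = cnt (map snd xs)"
  by (simp add: ntr_def cnt_def filter_map comp_def)

lemma touch_set:
  fixes ws :: "(bool \<times> bool) list"
  defines "P \<equiv> pth (map fst ws)" and "Q \<equiv> pth (map snd ws)"
  assumes n: "length ws = n" and r: "ntr ws = r"
  shows "(set P \<inter> set Q) - {(0, 0), (r, n - r)} = (\<lambda>i. P ! i) ` touches ws"
    and "inj_on (\<lambda>i. P ! i) (touches ws)"
proof -
  have rn: "r \<le> n" using ntr_le[of ws] n r by simp
  have Pi: "P ! i = (cnt (take i (map fst ws)), i - cnt (take i (map fst ws)))" if "i \<le> n" for i
    using that n by (simp add: P_def pth_nth)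
  have Qi: "Q ! i = (cnt (take i (map snd ws)), i - cnt (take i (map snd ws)))" if "i \<le> n" for i
    using that n by (simp add: Q_def pth_nth)
  have sP: "fst (P ! i) + snd (P ! i) = i" if "i \<le> n" for i
    using that n pth_sum[of i "map fst ws"] by (simp add: P_def)
  have sQ: "fst (Q ! i) + snd (Q ! i) = i" if "i \<le> n" for i
    using that n pth_sum[of i "map snd ws"] by (simp add: Q_def)
  have eqd: "P ! i = Q ! i \<longleftrightarrow> dif (take i ws) = 0" if "i \<le> n" for i
  proof -
    have "dif (take i ws) = int (cnt (take i (map fst ws))) - int (cnt (take i (map snd ws)))"
      using dif_ntr[of "take i ws", unfolded ntr_swap_cnt, unfolded ntr_cnt] by (simp add: take_map)
    moreover have "P ! i = Q ! i \<longleftrightarrow> cnt (take i (map fst ws)) = cnt (take i (map snd ws))"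
      using Pi[OF that] Qi[OF that] by auto
    ultimately show ?thesis by linarith
  qed
  have P0: "P ! 0 = (0, 0)" using Pi[of 0] by (simp add: cnt_def)
  have Pn: "P ! n = (r, n - r)" using Pi[of n] n r by (simp add: ntr_cnt)
  have lP: "length P = Suc n" "length Q = Suc n" using n by (auto simp: P_def Q_def)
  show "(set P \<inter> set Q) - {(0, 0), (r, n - r)} = (\<lambda>i. P ! i) ` touches ws"
  proof (rule set_eqI, rule iffI)
    fix x assume x: "x \<in> (set P \<inter> set Q) - {(0, 0), (r, n - r)}"
    then obtain i j where ij: "i \<le> n" "j \<le> n" "x = P ! i" "x = Q ! j"
      using lP by (auto simp: in_set_conv_nth less_Suc_eq_le)
    have "i = j" using sP[OF ij(1)] sQ[OF ij(2)] ij(3,4) by simp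
    then have d: "dif (take i ws) = 0" using eqd[OF ij(1)] ij by simp
    have x0: "x \<noteq> (0, 0)" "x \<noteq> (r, n - r)" using x by auto
    have "i \<noteq> 0"
    proof
      assume "i = 0" then show False using x0(1) ij(3) P0 by simp
    qed
    moreover have "i \<noteq> n"
    proof
      assume "i = n" then show False using x0(2) ij(3) Pn by simp
    qed
    ultimately have "i \<in> touches ws" using d ij(1) n by (simp add: touches_def)
    then show "x \<in> (\<lambda>i. P ! i) ` touches ws" using ij(3) by blast
  next
    fix x assume "x \<in> (\<lambda>i. P ! i) ` touches ws"
    then obtain i where i: "x = P ! i" "0 < i" "i < n" "dif (take i ws) = 0"
      using n by (auto simp: touches_def)
    have "x \<in> set P" using i lP by simp
    moreover have "x \<in> set Q"
    proof -
      have "i \<le> n" using i by simp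
      then have "P ! i = Q ! i" using eqd i(4) by blast
      moreover have "Q ! i \<in> set Q" using i lP by (intro nth_mem) simp
      ultimately show ?thesis using i(1) by simp
    qed
    moreover have "x \<noteq> (0, 0)" using sP[of i] i by auto
    moreover have "x \<noteq> (r, n - r)" using sP[of i] i rn by auto
    ultimately show "x \<in> (set P \<inter> set Q) - {(0, 0), (r, n - r)}" by blast
  qed
  show "inj_on (\<lambda>i. P ! i) (touches ws)"
  proof (rule inj_onI)
    fix i j assume ij: "i \<in> touches ws" "j \<in> touches ws" "P ! i = P ! j"
    then have "i \<le> n" "j \<le> n" using n by (auto simp: touches_def)
    then have "i = fst (P ! i) + snd (P ! i)" "j = fst (P ! j) + snd (P ! j)" using sP by auto
    then show "i = j" using ij(3) by simp
  qed
qed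

lemma N_count_eq:
  assumes "1 \<le> n" "r \<le> n"
  shows "N_count k n r = card (Sk k r (n - r))"
proof -
  define \<phi> where "\<phi> ws = (pth (map fst ws), pth (map snd ws))" for ws :: "(bool \<times> bool) list"
  have mem: "ws \<in> Sk k r (n - r) \<longleftrightarrow> length ws = n \<and> ntr ws = r \<and> dif ws = 0 \<and> card (touches ws) = k" for ws
    using assms by (auto simp: Sk_def Wd_def)
  have inj: "inj_on \<phi> (Sk k r (n - r))"
  proof (rule inj_onI)
    fix ws ws' assume h: "ws \<in> Sk k r (n - r)" "ws' \<in> Sk k r (n - r)" "\<phi> ws = \<phi> ws'"
    then have l: "length ws = n" "length ws' = n" using mem by auto
    have "map fst ws = map fst ws'" using h(3) l by (intro pth_inj) (auto simp: \<phi>_def)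
    moreover have "map snd ws = map snd ws'" using h(3) l by (intro pth_inj) (auto simp: \<phi>_def)
    ultimately show "ws = ws'" by (metis zip_map_fst_snd)
  qed
  have "{(P, Q). lattice_path n r P \<and> lattice_path n r Q \<and>
      card ((set P \<inter> set Q) - {(0, 0), (r, n - r)}) = k} = \<phi> ` Sk k r (n - r)"
  proof (rule set_eqI, rule iffI)
    fix x assume "x \<in> {(P, Q). lattice_path n r P \<and> lattice_path n r Q \<and>
      card ((set P \<inter> set Q) - {(0, 0), (r, n - r)}) = k}"
    then obtain P Q where x: "x = (P, Q)" "lattice_path n r P" "lattice_path n r Q"
      "card ((set P \<inter> set Q) - {(0, 0), (r, n - r)}) = k" by blast
    obtain p where p: "length p = n" "cnt p = r" "P = pth p" using lattice_pth[OF x(2)] by blast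
    obtain q where q: "length q = n" "cnt q = r" "Q = pth q" using lattice_pth[OF x(3)] by blast
    define ws where "ws = zip p q"
    have f: "map fst ws = p" "map snd ws = q" using p(1) q(1) by (auto simp: ws_def)
    have lw: "length ws = n" using p(1) q(1) by (simp add: ws_def)
    have nw: "ntr ws = r" using f p(2) by (simp add: ntr_cnt)
    have "ntr (map prod.swap ws) = r" using f q(2) by (simp add: ntr_swap_cnt)
    then have dw: "dif ws = 0" using nw dif_ntr[of ws] by simp
    have "card (touches ws) = k"
    proof -
      have "card ((set P \<inter> set Q) - {(0, 0), (r, n - r)}) = card ((\<lambda>i. P ! i) ` touches ws)"
        using touch_set(1)[OF lw nw] p(3) q(3) f by simp
      also have "\<dots> = card (touches ws)"
        using touch_set(2)[OF lw nw] p(3) f by (simp add: card_image)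
      finally show ?thesis using x(4) by simp
    qed
    then have "ws \<in> Sk k r (n - r)" using mem lw nw dw by blast
    moreover have "x = \<phi> ws" using x(1) p(3) q(3) f by (simp add: \<phi>_def)
    ultimately show "x \<in> \<phi> ` Sk k r (n - r)" by blast
  next
    fix x assume "x \<in> \<phi> ` Sk k r (n - r)"
    then obtain ws where ws: "x = \<phi> ws" "ws \<in> Sk k r (n - r)" by blast
    then have h: "length ws = n" "ntr ws = r" "dif ws = 0" "card (touches ws) = k" using mem by auto
    have c1: "cnt (map fst ws) = r" using h(2) by (simp add: ntr_cnt)
    have "ntr (map prod.swap ws) = r" using h(2,3) dif_ntr[of ws] by simp
    then have c2: "cnt (map snd ws) = r" by (simp add: ntr_swap_cnt)
    have lp1: "lattice_path n r (pth (map fst ws))" using h(1) c1 by (intro pth_lattice) auto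
    have lp2: "lattice_path n r (pth (map snd ws))" using h(1) c2 by (intro pth_lattice) auto
    have "card ((set (pth (map fst ws)) \<inter> set (pth (map snd ws))) - {(0, 0), (r, n - r)}) = k"
    proof -
      have "card ((set (pth (map fst ws)) \<inter> set (pth (map snd ws))) - {(0, 0), (r, n - r)})
          = card ((\<lambda>i. pth (map fst ws) ! i) ` touches ws)"
        using touch_set(1)[OF h(1,2)] by simp
      also have "\<dots> = card (touches ws)"
        using touch_set(2)[OF h(1,2)] by (simp add: card_image)
      finally show ?thesis using h(4) by simp
    qed
    then show "x \<in> {(P, Q). lattice_path n r P \<and> lattice_path n r Q \<and>
      card ((set P \<inter> set Q) - {(0, 0), (r, n - r)}) = k}"
      using ws(1) lp1 lp2 by (simp add: \<phi>_def)
  qed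
  then show ?thesis unfolding N_count_def using inj by (simp add: card_image)
qed

theorem mainTheorem3:
  fixes n r k :: nat
  assumes "1 \<le> n" and "r \<le> n"
  shows "of_nat (N_count k n r) = coeff2 ((Yv + Zv + 2 * f_series) ^ (k + 1)) r (n - r)"
proof -
  have "(Yv + Zv + 2 * f_series) ^ (k + 1) = mkgf (\<lambda>a b. card (Sk k a b))"
    by (simp add: f_series_eq cP_eq[symmetric] cS_pow)
  then show ?thesis using N_count_eq[OF assms] by simp
qed

end
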